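(* Let $E$ and $F$ be unital operator systems and let $\phi:E\to F$ be a ucp map for which there exists a $*$-homomorphism $\widetilde\phi:C^*_{\mathrm{env}}(E)\to C^*_{\mathrm{env}}(F)$ with $\iota_F\circ\phi=\widetilde\phi\circ\iota_E$. Then for every $n$ there is a well-defined map $\phi^*:\mathcal V(E,n)\to\mathcal V(F,n)$ given by $\phi^*([x]_n)=[\phi^{(n)}(x)]_n$.
   Context: A unital operator system $(E,e)$ is a matrix-ordered $*$-vector space with Archimedean matrix order unit $e$; $C^*_{\mathrm{env}}(E)$ is its $C^*$-envelope with unital complete order embedding $\iota_E$; $\phi^{(n)}$ is the entrywise amplification. A self-adjoint $x\in M_n(E)$ is a hermitian form if there is $g>0$ with $|\psi^{(n)}(x)|\ge g\cdot\mathrm{id}^{\oplus n}$ for all pure and maximal ucp maps $\psi:E\to B(\mathcal H)$; equivalently $\iota_E^{(n)}(x)$ is invertible in $M_n(C^*_{\mathrm{env}}(E))$. $H(E,n)$ is the set of hermitian forms in $M_n(E)$ with the norm topology. For $x,x'\in H(E,n)$, $x\sim_n x'$ if there is a norm-continuous path $\tilde x:[0,1]\to H(E,n)$ (i.e. a hermitian form in $M_n(C([0,1])\otimes E)$) with $\tilde x(0)=x$, $\tilde x(1)=x'$. $\mathcal V(E,n)=\pi_0(H(E,n))$ is the set of $\sim_n$-classes $[x]_n$. *)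

theory Defs
  imports "HOL-Analysis.Analysis"
begin

text \<open>The whole type is the C*-algebra.\<close>

class cstar_algebra = real_normed_algebra_1 + banach +
  fixes cstar :: "'a \<Rightarrow> 'a"
    and cscale :: "complex \<Rightarrow> 'a \<Rightarrow> 'a"
  assumes cscale_of_real: "cscale (complex_of_real r) x = scaleR r x"
    and cscale_assoc: "cscale a (cscale b x) = cscale (a * b) x"
    and cscale_add_right: "cscale a (x + y) = cscale a x + cscale a y"
    and cscale_add_left: "cscale (a + b) x = cscale a x + cscale b x"
    and cscale_mult_left: "cscale a x * y = cscale a (x * y)"
    and cscale_mult_right: "x * cscale a y = cscale a (x * y)"
    and norm_cscale: "norm (cscale a x) = cmod a * norm x"
    and cstar_cstar: "cstar (cstar x) = x"
    and cstar_add: "cstar (x + y) = cstar x + cstar y"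
    and cstar_cscale: "cstar (cscale a x) = cscale (cnj a) (cstar x)"
    and cstar_mult: "cstar (x * y) = cstar y * cstar x"
    and cstar_identity: "norm (cstar x * x) = (norm x)^2"

text \<open>M_n(S): n\<times>n matrices with entries in S, represented as functions
nat \<Rightarrow> nat \<Rightarrow> 'a that vanish outside the index range.\<close>

definition mats :: "nat \<Rightarrow> 'a::zero set \<Rightarrow> (nat \<Rightarrow> nat \<Rightarrow> 'a) set" where
  "mats n S = {X. (\<forall>i j. i < n \<and> j < n \<longrightarrow> X i j \<in> S) \<and>
                  (\<forall>i j. \<not> (i < n \<and> j < n) \<longrightarrow> X i j = 0)}"

definition mmult :: "nat \<Rightarrow> (nat \<Rightarrow> nat \<Rightarrow> 'a::cstar_algebra) \<Rightarrow> (nat \<Rightarrow> nat \<Rightarrow> 'a) \<Rightarrow> nat \<Rightarrow> nat \<Rightarrow> 'a" where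
  "mmult n X Y = (\<lambda>i j. if i < n \<and> j < n then (\<Sum>k<n. X i k * Y k j) else 0)"

definition madj :: "nat \<Rightarrow> (nat \<Rightarrow> nat \<Rightarrow> 'a::cstar_algebra) \<Rightarrow> nat \<Rightarrow> nat \<Rightarrow> 'a" where
  "madj n X = (\<lambda>i j. if i < n \<and> j < n then cstar (X j i) else 0)"

definition mone :: "nat \<Rightarrow> nat \<Rightarrow> nat \<Rightarrow> 'a::cstar_algebra" where
  "mone n = (\<lambda>i j. if i < n \<and> j < n \<and> i = j then 1 else 0)"

definition mdiff :: "(nat \<Rightarrow> nat \<Rightarrow> 'a::cstar_algebra) \<Rightarrow> (nat \<Rightarrow> nat \<Rightarrow> 'a) \<Rightarrow> nat \<Rightarrow> nat \<Rightarrow> 'a" where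
  "mdiff X Y = (\<lambda>i j. X i j - Y i j)"

text \<open>The C*-norm of M_n(A), realised as adjointable operators on the Hilbert
module A^n:
  \<parallel>X\<parallel> = sup { \<parallel>\<xi>* X \<eta>\<parallel> : \<parallel>\<xi>*\<xi>\<parallel> \<le> 1, \<parallel>\<eta>*\<eta>\<parallel> \<le> 1 }.\<close>

definition mnorm :: "nat \<Rightarrow> (nat \<Rightarrow> nat \<Rightarrow> 'a::cstar_algebra) \<Rightarrow> real" where
  "mnorm n X = Sup {norm (\<Sum>i<n. \<Sum>j<n. cstar (\<xi> i) * X i j * \<eta> j) | \<xi> \<eta>.
       norm (\<Sum>i<n. cstar (\<xi> i) * \<xi> i) \<le> 1 \<and> norm (\<Sum>i<n. cstar (\<eta> i) * \<eta> i) \<le> 1}"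

definition mpos :: "nat \<Rightarrow> (nat \<Rightarrow> nat \<Rightarrow> 'a::cstar_algebra) \<Rightarrow> bool" where
  "mpos n X \<longleftrightarrow> (\<exists>Y \<in> mats n UNIV. X = mmult n (madj n Y) Y)"

definition minvertible :: "nat \<Rightarrow> (nat \<Rightarrow> nat \<Rightarrow> 'a::cstar_algebra) \<Rightarrow> bool" where
  "minvertible n X \<longleftrightarrow> (\<exists>Y \<in> mats n UNIV. mmult n X Y = mone n \<and> mmult n Y X = mone n)"

definition amp :: "nat \<Rightarrow> ('a::zero \<Rightarrow> 'b::zero) \<Rightarrow> (nat \<Rightarrow> nat \<Rightarrow> 'a) \<Rightarrow> nat \<Rightarrow> nat \<Rightarrow> 'b" where
  "amp n \<phi> X = (\<lambda>i j. if i < n \<and> j < n then \<phi> (X i j) else 0)"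

definition csubspace :: "'a::cstar_algebra set \<Rightarrow> bool" where
  "csubspace S \<longleftrightarrow> 0 \<in> S \<and> (\<forall>x\<in>S. \<forall>y\<in>S. x + y \<in> S) \<and> (\<forall>c. \<forall>x\<in>S. cscale c x \<in> S)"

text \<open>A (concrete) unital operator system inside the C*-algebra: a unital self-adjoint
complex subspace; its matrix order is the one inherited from M_n(A) and its
order unit is 1.\<close>
definition operator_system :: "'a::cstar_algebra set \<Rightarrow> bool" where
  "operator_system E \<longleftrightarrow> csubspace E \<and> 1 \<in> E \<and> (\<forall>x\<in>E. cstar x \<in> E)"

definition closed_ideal :: "'a::cstar_algebra set \<Rightarrow> bool" where
  "closed_ideal J \<longleftrightarrow> closed J \<and> csubspace J \<and> (\<forall>a. \<forall>x\<in>J. a * x \<in> J \<and> x * a \<in> J)"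

definition generates :: "'a::cstar_algebra set \<Rightarrow> bool" where
  "generates E \<longleftrightarrow> (\<forall>S. closed S \<and> csubspace S \<and> 1 \<in> S \<and> (\<forall>x\<in>S. \<forall>y\<in>S. x * y \<in> S)
        \<and> (\<forall>x\<in>S. cstar x \<in> S) \<and> E \<subseteq> S \<longrightarrow> S = UNIV)"

text \<open>The ambient C*-algebra (whole type), with the inclusion of E, is the C*-envelope of E:
E generates it and its Shilov boundary ideal is trivial, i.e. no nonzero closed ideal J
is a boundary ideal (the quotient map A \<rightarrow> A/J is not completely isometric on E;
the norm of M_n(A/J) = M_n(A)/M_n(J) is the quotient norm).\<close>
definition cstar_envelope :: "'a::cstar_algebra set \<Rightarrow> bool" where
  "cstar_envelope E \<longleftrightarrow> generates E \<and>
     (\<forall>J. closed_ideal J \<and> J \<noteq> {0} \<longrightarrow>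
        (\<exists>n. \<exists>X \<in> mats n E. (INF Y \<in> mats n J. mnorm n (mdiff X Y)) < mnorm n X))"

definition ucp :: "'a::cstar_algebra set \<Rightarrow> 'b::cstar_algebra set \<Rightarrow> ('a \<Rightarrow> 'b) \<Rightarrow> bool" where
  "ucp E F \<phi> \<longleftrightarrow> (\<forall>x\<in>E. \<phi> x \<in> F) \<and> \<phi> 1 = 1 \<and>
     (\<forall>x\<in>E. \<forall>y\<in>E. \<phi> (x + y) = \<phi> x + \<phi> y) \<and> (\<forall>c. \<forall>x\<in>E. \<phi> (cscale c x) = cscale c (\<phi> x)) \<and>
     (\<forall>n. \<forall>X \<in> mats n E. mpos n X \<longrightarrow> mpos n (amp n \<phi> X))"

definition star_hom :: "('a::cstar_algebra \<Rightarrow> 'b::cstar_algebra) \<Rightarrow> bool" where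
  "star_hom \<psi> \<longleftrightarrow> (\<forall>x y. \<psi> (x + y) = \<psi> x + \<psi> y) \<and> (\<forall>c x. \<psi> (cscale c x) = cscale c (\<psi> x)) \<and>
     (\<forall>x y. \<psi> (x * y) = \<psi> x * \<psi> y) \<and> (\<forall>x. \<psi> (cstar x) = cstar (\<psi> x))"

text \<open>H(E,n): self-adjoint elements of M_n(E) invertible in
M_n(C*_env(E)).\<close>
definition hforms :: "nat \<Rightarrow> 'a::cstar_algebra set \<Rightarrow> (nat \<Rightarrow> nat \<Rightarrow> 'a) set" where
  "hforms n E = {X \<in> mats n E. madj n X = X \<and> minvertible n X}"

text \<open>\<sim>_n: joined by a norm-continuous path in H(E,n) (norm continuity in
M_n(A) is equivalent to entrywise norm continuity).\<close>
definition hrel :: "nat \<Rightarrow> 'a::cstar_algebra set \<Rightarrow> ((nat \<Rightarrow> nat \<Rightarrow> 'a) \<times> (nat \<Rightarrow> nat \<Rightarrow> 'a)) set" where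
  "hrel n E = {(x, y). x \<in> hforms n E \<and> y \<in> hforms n E \<and>
      (\<exists>p :: real \<Rightarrow> nat \<Rightarrow> nat \<Rightarrow> 'a. (\<forall>t\<in>{0..1}. p t \<in> hforms n E) \<and>
         (\<forall>i j. continuous_on {0..1} (\<lambda>t. p t i j)) \<and> p 0 = x \<and> p 1 = y)}"

definition Vclasses :: "nat \<Rightarrow> 'a::cstar_algebra set \<Rightarrow> (nat \<Rightarrow> nat \<Rightarrow> 'a) set set" where
  "Vclasses n E = hforms n E // hrel n E"

end

theory Submission
  imports Defs
begin


definition isinv :: "'a::ring_1 \<Rightarrow> 'a \<Rightarrow> bool" where
  "isinv a b \<longleftrightarrow> a * b = 1 \<and> b * a = 1"

lemma isinv_unique: "isinv a b \<Longrightarrow> isinv a c \<Longrightarrow> b = c"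
  unfolding isinv_def by (metis mult.assoc mult_1_left mult_1_right)

lemma neumann:
  fixes x :: "'a::{real_normed_algebra_1,banach}"
  assumes "norm x < 1"
  shows "\<exists>y. isinv (1 - x) y"
proof -
  have s: "summable (\<lambda>n. x^n)" by (rule complete_algebra_summable_geometric[OF assms])
  have t: "(\<lambda>n. x^n - x^Suc n) sums (x^0 - 0)"
    by (rule telescope_sums'[OF LIMSEQ_power_zero[OF assms]])
  have "(\<lambda>n. (1 - x) * x^n) sums ((1-x) * suminf (\<lambda>n. x^n))"
    by (rule sums_mult[OF summable_sums[OF s]])
  moreover have "(\<lambda>n. (1 - x) * x^n) = (\<lambda>n. x^n - x^Suc n)"
    by (simp add: algebra_simps)
  ultimately have 1: "(1-x) * suminf (\<lambda>n. x^n) = 1" using t sums_unique2 by fastforce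
  have "(\<lambda>n. x^n * (1 - x)) sums (suminf (\<lambda>n. x^n) * (1-x))"
    by (rule sums_mult2[OF summable_sums[OF s]])
  moreover have "(\<lambda>n. x^n * (1 - x)) = (\<lambda>n. x^n - x^Suc n)"
    by (simp add: algebra_simps power_Suc2 power_commutes)
  ultimately have 2: "suminf (\<lambda>n. x^n) * (1-x) = 1" using t sums_unique2 by fastforce
  show ?thesis using 1 2 unfolding isinv_def by blast
qed

lemma geom_left:
  fixes u :: "'a::ring_1"
  shows "(1 - u) * (\<Sum>m<N. u^m) = 1 - u^N"
proof (induction N)
  case 0 then show ?case by simp
next
  case (Suc N)
  have "(1 - u) * (\<Sum>m<Suc N. u^m) = (1 - u) * (\<Sum>m<N. u^m) + (1 - u) * u^N"
    by (simp add: distrib_left)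
  also have "\<dots> = 1 - u^N + (u^N - u^Suc N)" using Suc by (simp add: algebra_simps)
  finally show ?case by simp
qed

lemma cscale_one[simp]: "cscale 1 (x::'a::cstar_algebra) = x"
  using cscale_of_real[of 1 x] by simp

lemma cscale_zero_left[simp]: "cscale 0 (x::'a::cstar_algebra) = 0"
  using cscale_of_real[of 0 x] by simp

lemma cscale_zero_right[simp]: "cscale c (0::'a::cstar_algebra) = 0"
  using cscale_add_right[of c 0 0] by simp

lemma cscale_real: "cscale (complex_of_real r) (x::'a::cstar_algebra) = r *\<^sub>R x"
  by (rule cscale_of_real)

lemma cscale_minus_right: "cscale c (- x::'a::cstar_algebra) = - cscale c x"
  using cscale_add_right[of c x "-x"] by (simp add: eq_neg_iff_add_eq_0 add.commute)

lemma cscale_diff_right: "cscale c (x - y::'a::cstar_algebra) = cscale c x - cscale c y"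
  using cscale_add_right[of c x "-y"] cscale_minus_right by (simp)

lemma cscale_minus_left: "cscale (- c) (x::'a::cstar_algebra) = - cscale c x"
  using cscale_add_left[of c "-c" x] by (simp add: eq_neg_iff_add_eq_0 add.commute)

lemma cscale_diff_left: "cscale (c - d) (x::'a::cstar_algebra) = cscale c x - cscale d x"
  using cscale_add_left[of c "-d" x] cscale_minus_left by simp

lemma cscale_sum_left: "cscale (\<Sum>j\<in>A. f j) (x::'a::cstar_algebra) = (\<Sum>j\<in>A. cscale (f j) x)"
  by (induction A rule: infinite_finite_induct) (auto simp: cscale_add_left)

lemma cscale_sum_right: "cscale c (\<Sum>j\<in>A. f j) = (\<Sum>j\<in>A. cscale c (f j::'a::cstar_algebra))"
  by (induction A rule: infinite_finite_induct) (auto simp: cscale_add_right)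

lemma cscale_power: "(cscale c x) ^ m = cscale (c ^ m) ((x::'a::cstar_algebra) ^ m)"
proof (induction m)
  case 0 then show ?case by simp
next
  case (Suc m)
  have "cscale c x ^ Suc m = cscale c x * cscale (c ^ m) (x ^ m)" using Suc by simp
  also have "\<dots> = cscale (c ^ Suc m) (x ^ Suc m)"
    by (simp add: cscale_mult_left cscale_mult_right cscale_assoc mult.commute)
  finally show ?case .
qed

lemma cstar_power: "cstar h = h \<Longrightarrow> cstar ((h::'a::cstar_algebra) ^ m) = h ^ m"
proof (induction m)
  case 0
  have "cstar (1::'a) = cstar 1 * cstar (cstar 1)" by (metis cstar_cstar mult_1_right)
  also have "\<dots> = cstar (cstar 1 * 1)" by (simp only: cstar_mult)
  also have "\<dots> = 1" by (simp add: cstar_cstar)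
  finally show ?case by simp
next
  case (Suc m)
  then show ?case by (simp add: cstar_mult power_commutes)
qed

lemma norm_pow2: "cstar h = h \<Longrightarrow> norm ((h::'a::cstar_algebra) ^ (2^m)) = norm h ^ (2^m)"
proof (induction m)
  case 0 then show ?case by simp
next
  case (Suc m)
  have "h ^ (2 ^ Suc m) = cstar (h ^ 2 ^ m) * h ^ 2 ^ m"
    using cstar_power[OF Suc.prems] by (simp add: power_add[symmetric] mult_2)
  then have "norm (h ^ (2 ^ Suc m)) = (norm (h ^ 2 ^ m))^2" by (simp add: cstar_identity)
  then show ?case using Suc by (simp add: power_mult[symmetric] mult.commute)
qed

lemma resolvent_eq:
  fixes h :: "'a::cstar_algebra"
  assumes "isinv (1 - cscale v h) Rv" "isinv (1 - cscale v0 h) Rv0"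
  shows "Rv - Rv0 = Rv0 * cscale (v - v0) h * Rv"
proof -
  have a: "Rv0 * (1 - cscale v0 h) = 1" "(1 - cscale v h) * Rv = 1"
    using assms unfolding isinv_def by auto
  have "Rv0 * cscale (v - v0) h * Rv = Rv0 * ((1 - cscale v0 h) - (1 - cscale v h)) * Rv"
    by (simp add: cscale_diff_left)
  also have "\<dots> = (Rv0 * (1 - cscale v0 h)) * Rv - Rv0 * ((1 - cscale v h) * Rv)"
    by (simp add: algebra_simps)
  also have "\<dots> = Rv - Rv0" using a by simp
  finally show ?thesis by simp
qed

lemma resolvent_cont:
  fixes h :: "'a::cstar_algebra"
  assumes R: "\<And>v. v \<in> S \<Longrightarrow> isinv (1 - cscale v h) (R v)"
  shows "continuous_on S R"
  unfolding continuous_on_iff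
proof (intro ballI allI impI)
  fix v0 and e :: real
  assume v0: "v0 \<in> S" and e: "0 < e"
  define K where "K = norm (R v0) + 1"
  define H where "H = norm h + 1"
  have K: "K > 0" "norm (R v0) \<le> K" unfolding K_def by (auto simp: add_nonneg_pos)
  have H: "H > 0" "norm h \<le> H" unfolding H_def by (auto simp: add_nonneg_pos)
  define d where "d = min (1/(2*K*H)) (e/(4*K*K*H))"
  have d: "d > 0" unfolding d_def using K H e by auto
  show "\<exists>d>0. \<forall>v\<in>S. dist v v0 < d \<longrightarrow> dist (R v) (R v0) < e"
  proof (intro exI[of _ d] conjI ballI impI d)
    fix v assume v: "v \<in> S" "dist v v0 < d"
    define D where "D = norm (R v - R v0)"
    define c where "c = cmod (v - v0) * norm h"
    have c0: "c \<ge> 0" unfolding c_def by auto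
    have cH: "c \<le> cmod (v - v0) * H" unfolding c_def using H by (simp add: mult_left_mono)
    have cd: "c < d * H"
    proof -
      have "cmod (v - v0) < d" using v(2) by (simp add: dist_norm)
      then have "cmod (v - v0) * H < d * H" using H by simp
      then show ?thesis using cH by linarith
    qed
    have Kc: "K * c \<le> 1/2"
    proof -
      have "d \<le> 1/(2*K*H)" by (simp add: d_def)
      then have "d * H \<le> 1/(2*K*H) * H" using H by (intro mult_right_mono) auto
      also have "\<dots> = 1/(2*K)" using H by simp
      finally have "c \<le> 1/(2*K)" using cd by linarith
      then have "K * c \<le> K * (1/(2*K))" using K by (intro mult_left_mono) auto
      also have "\<dots> = 1/2" using K by simp
      finally show ?thesis .
    qed
    have eq: "R v - R v0 = R v0 * cscale (v - v0) h * R v"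
      by (rule resolvent_eq[OF R[OF v(1)] R[OF v0]])
    have Rv: "norm (R v) \<le> K + D"
    proof -
      have "norm (R v) \<le> norm (R v0) + norm (R v - R v0)"
        by (metis add.commute diff_add_cancel norm_triangle_ineq)
      then show ?thesis using K unfolding D_def by linarith
    qed
    have "D \<le> norm (R v0) * norm (cscale (v - v0) h) * norm (R v)"
    proof -
      have "norm (R v0 * cscale (v - v0) h * R v) \<le> norm (R v0 * cscale (v - v0) h) * norm (R v)"
        by (rule norm_mult_ineq)
      also have "\<dots> \<le> norm (R v0) * norm (cscale (v - v0) h) * norm (R v)"
        by (intro mult_right_mono norm_mult_ineq norm_ge_zero)
      finally show ?thesis unfolding D_def eq .
    qed
    also have "\<dots> = norm (R v0) * c * norm (R v)" by (simp add: norm_cscale c_def)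
    also have "\<dots> \<le> K * c * (K + D)"
    proof (rule mult_mono)
      show "norm (R v0) * c \<le> K * c" using K c0 by (intro mult_right_mono) auto
      show "norm (R v) \<le> K + D" by (rule Rv)
      show "0 \<le> K * c" using K c0 by simp
      show "0 \<le> norm (R v)" by simp
    qed
    finally have "D \<le> K * c * K + (K * c) * D" by (simp add: algebra_simps)
    moreover have "(K * c) * D \<le> 1/2 * D" using Kc unfolding D_def by (rule mult_right_mono) simp
    moreover have "K * c * K = K * K * c" by simp
    ultimately have "D \<le> 2 * (K * K * c)" by linarith
    also have "\<dots> < 2 * (K * K * (d * H))" using cd K by simp
    also have "\<dots> \<le> 2 * (K * K * (e/(4*K*K*H) * H))"
    proof -
      have "d \<le> e/(4*K*K*H)" by (simp add: d_def)
      then have "d * H \<le> e/(4*K*K*H) * H" using H by (intro mult_right_mono) auto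
      then show ?thesis using K by simp
    qed
    also have "\<dots> = e / 2" using K H by (simp add: field_simps)
    finally show "dist (R v) (R v0) < e" using e by (simp add: dist_norm D_def)
  qed
qed

lemma roots_sum_zero:
  fixes N m :: nat
  assumes "0 < m" "m < N"
  shows "(\<Sum>j<N. (cis (2*pi/N) ^ m) ^ j) = 0"
proof -
  define x where "x = cis (2*pi/N) ^ m"
  have x: "x = cis (real m * (2*pi/N))" unfolding x_def by (rule Complex.DeMoivre)
  have xN: "x ^ N = 1"
  proof -
    have "x ^ N = cis (real N * (real m * (2*pi/N)))" unfolding x by (rule Complex.DeMoivre)
    also have "real N * (real m * (2*pi/N)) = 2 * pi * real m" using assms by simp
    finally show ?thesis by simp
  qed
  have x1: "x \<noteq> 1"
  proof
    assume "x = 1"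
    then have "exp (\<i> * complex_of_real (real m * (2*pi/N))) = 1" unfolding x cis_conv_exp by simp
    then obtain n :: int where n: "real m * (2*pi/N) = of_int (2*n) * pi"
      unfolding exp_eq_1 by auto
    have "real m = real N * of_int n"
    proof -
      have "real m * (2*pi) = (real N * of_int n) * (2 * pi)"
        using n assms by (simp add: field_simps)
      then show ?thesis by simp
    qed
    moreover have "n > 0"
    proof (rule ccontr)
      assume "\<not> n > 0"
      then have "real N * of_int n \<le> 0" by (simp add: mult_nonneg_nonpos)
      then show False using \<open>real m = real N * of_int n\<close> assms by simp
    qed
    then have "(of_int n::real) \<ge> 1" by simp
    then have "real N * of_int n \<ge> real N * 1" by (intro mult_left_mono) auto
    ultimately have "real m \<ge> real N" by simp
    then show False using assms by simp
  qed
  have "(\<Sum>j<N. x ^ j) = (x ^ N - 1) / (x - 1)" by (rule geometric_sum[OF x1])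
  then show ?thesis using xN x_def by simp
qed

lemma avg_identity:
  fixes h :: "'a::cstar_algebra" and w :: complex
  assumes N: "0 < N"
    and Q: "isinv (1 - cscale (w^N) (h^N)) Q"
    and Rj: "\<And>j. j < N \<Longrightarrow> isinv (1 - cscale (cis (2*pi/N)^j * w) h) (Rj j)"
  shows "scaleR (1/N) (\<Sum>j<N. Rj j) = Q"
proof -
  define \<omega> where "\<omega> = cis (2*pi/N)"
  have \<omega>N: "\<omega> ^ N = 1"
  proof -
    have "\<omega> ^ N = cis (real N * (2*pi/N))" unfolding \<omega>_def by (rule Complex.DeMoivre)
    also have "real N * (2*pi/N) = 2 * pi" using N by simp
    finally show ?thesis by simp
  qed
  define S where "S j = (\<Sum>m<N. cscale ((\<omega>^j * w)^m) (h^m))" for j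
  have RS: "Rj j = S j * Q" if j: "j < N" for j
  proof -
    define u where "u = cscale (\<omega>^j * w) h"
    have uN: "u ^ N = cscale (w^N) (h^N)"
    proof -
      have "(\<omega>^j * w)^N = (\<omega>^N)^j * w^N" by (simp add: power_mult_distrib power_mult[symmetric] mult.commute)
      then show ?thesis unfolding u_def cscale_power using \<omega>N by simp
    qed
    have Su: "S j = (\<Sum>m<N. u^m)" unfolding S_def u_def cscale_power by simp
    have "(1 - u) * (S j * Q) = (1 - u^N) * Q" unfolding Su by (simp add: geom_left mult.assoc[symmetric])
    also have "\<dots> = 1" using Q uN unfolding isinv_def by simp
    finally have a: "(1 - u) * (S j * Q) = 1" .
    have b: "Rj j * (1 - u) = 1" using Rj[OF j] unfolding isinv_def u_def \<omega>_def by simp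
    have "Rj j = Rj j * ((1 - u) * (S j * Q))" using a by simp
    also have "\<dots> = S j * Q" using b by (simp add: mult.assoc[symmetric])
    finally show ?thesis .
  qed
  have sumS: "(\<Sum>j<N. S j) = of_nat N"
  proof -
    have "(\<Sum>j<N. S j) = (\<Sum>m<N. \<Sum>j<N. cscale ((\<omega>^j * w)^m) (h^m))"
      unfolding S_def by (rule sum.swap)
    also have "\<dots> = (\<Sum>m<N. cscale (\<Sum>j<N. (\<omega>^j * w)^m) (h^m))"
      by (simp add: cscale_sum_left)
    also have "\<dots> = (\<Sum>m<N. if m = 0 then of_nat N else 0)"
    proof (rule sum.cong[OF refl])
      fix m assume m: "m \<in> {..<N}"
      have "(\<Sum>j<N. (\<omega>^j * w)^m) = w^m * (\<Sum>j<N. (\<omega>^m)^j)"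
        by (simp add: sum_distrib_left power_mult_distrib power_mult[symmetric] mult.commute)
      moreover have "m \<noteq> 0 \<Longrightarrow> (\<Sum>j<N. (\<omega>^m)^j) = 0"
        using roots_sum_zero[of m N] m unfolding \<omega>_def by simp
      ultimately show "cscale (\<Sum>j<N. (\<omega>^j * w)^m) (h^m) = (if m = 0 then of_nat N else 0)"
        using cscale_of_real[of "real N" "1::'a"] by (auto simp: scaleR_conv_of_real)
    qed
    also have "\<dots> = of_nat N" using N by (simp add: sum.delta)
    finally show ?thesis .
  qed
  have "(\<Sum>j<N. Rj j) = (\<Sum>j<N. S j * Q)" using RS by simp
  also have "\<dots> = of_nat N * Q" by (simp add: sum_distrib_right[symmetric] sumS)
  also have "\<dots> = real N *\<^sub>R Q" by (simp add: scaleR_conv_of_real)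
  finally show ?thesis using N by simp
qed



lemma selfadj_norm_le1:
  fixes h :: "'a::cstar_algebra"
  assumes sa: "cstar h = h"
    and inv: "\<And>v N. cmod v \<le> 1 \<Longrightarrow> \<exists>y. isinv (1 - cscale v (h ^ Suc N)) y"
  shows "norm h \<le> 1"
proof (rule ccontr)
  assume "\<not> norm h \<le> 1"
  then have L: "norm h > 1" by simp
  define \<rho> where "\<rho> = 1 / norm h"
  have \<rho>: "0 < \<rho>" "\<rho> < 1" "\<rho> * norm h = 1" using L by (auto simp: \<rho>_def divide_less_eq)
  define R where "R v = (SOME y. isinv (1 - cscale v h) y)" for v
  have Rinv: "isinv (1 - cscale v h) (R v)" if "cmod v \<le> 1" for v
  proof -
    have "\<exists>y. isinv (1 - cscale v h) y" using inv[OF that, of 0] by simp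
    then show ?thesis unfolding R_def by (rule someI_ex)
  qed
  have Rc: "continuous_on (cball 0 1) R"
    by (rule resolvent_cont[where h = h]) (use Rinv in auto)
  define f where "f \<theta> = R (complex_of_real \<rho> * cis \<theta>)" for \<theta>
  have finv: "isinv (1 - cscale (complex_of_real \<rho> * cis \<theta>) h) (f \<theta>)" for \<theta>
    unfolding f_def by (rule Rinv) (use \<rho> in \<open>simp add: norm_mult\<close>)
  have fc: "continuous_on {0..4*pi} f"
    unfolding f_def
    by (rule continuous_on_compose2[OF Rc]) (auto intro!: continuous_intros simp: norm_mult abs_of_pos[OF \<rho>(1)] less_imp_le[OF \<rho>(2)])
  have uc: "uniformly_continuous_on {0..4*pi} f"
    by (rule compact_uniformly_continuous[OF fc compact_Icc])
  then obtain d where d: "d > 0"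
    "\<And>x x'. x \<in> {0..4*pi} \<Longrightarrow> x' \<in> {0..4*pi} \<Longrightarrow> dist x' x < d \<Longrightarrow> dist (f x') (f x) < 1/4"
    unfolding uniformly_continuous_on_def by (metis zero_less_divide_1_iff zero_less_numeral)
  obtain k :: nat where k: "pi / d < k" using reals_Archimedean2 by blast
  define N where "N = (2::nat)^k"
  have N0: "N > 0" unfolding N_def by simp
  have "real k < real N" unfolding N_def by (simp add: less_exp)
  then have "pi / d < real N" using k by linarith
  then have "pi < real N * d" using d(1) by (simp add: field_simps)
  then have Nd: "pi / real N < d" using N0 by (simp add: field_simps)
  define \<omega> where "\<omega> = cis (2*pi/N)"
  define \<theta> where "\<theta> j = real j * (2*pi/N)" for j :: nat
  have \<omega>j: "\<omega>^j = cis (\<theta> j)" for j unfolding \<omega>_def \<theta>_def by (rule Complex.DeMoivre)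
  define x where "x = (\<rho>^N) *\<^sub>R (h^N)"
  define w1 where "w1 = complex_of_real \<rho>"
  define w2 where "w2 = complex_of_real \<rho> * cis (pi/N)"
  have w1N: "cscale (w1^N) (h^N) = x" unfolding w1_def x_def by (simp add: cscale_real[symmetric])
  have "w2^N = complex_of_real (\<rho>^N) * cis (real N * (pi/N))"
    unfolding w2_def by (simp add: power_mult_distrib Complex.DeMoivre)
  also have "real N * (pi/N) = pi" using N0 by simp
  finally have "w2^N = - complex_of_real (\<rho>^N)" by simp
  then have w2N: "cscale (w2^N) (h^N) = - x" unfolding x_def by (simp add: cscale_minus_left cscale_real[symmetric])
  have NS: "Suc (N - 1) = N" using N0 by simp
  obtain Q1 where Q1: "isinv (1 - cscale (w1^N) (h^N)) Q1"
    using inv[of "w1^N" "N - 1"] \<rho> unfolding NS by (auto simp: w1_def norm_power power_le_one)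
  obtain Q2 where Q2: "isinv (1 - cscale (w2^N) (h^N)) Q2"
    using inv[of "w2^N" "N - 1"] \<rho> unfolding NS by (auto simp: w2_def norm_power norm_mult power_le_one)
  have A1: "scaleR (1/N) (\<Sum>j<N. f (\<theta> j)) = Q1"
  proof (rule avg_identity[OF N0 Q1])
    fix j assume "j < N"
    have "cis (2*pi/N)^j * w1 = complex_of_real \<rho> * cis (\<theta> j)"
      using \<omega>j[of j] unfolding w1_def \<omega>_def by simp
    then show "isinv (1 - cscale (cis (2*pi/N)^j * w1) h) (f (\<theta> j))" using finv by simp
  qed
  have A2: "scaleR (1/N) (\<Sum>j<N. f (\<theta> j + pi/N)) = Q2"
  proof (rule avg_identity[OF N0 Q2])
    fix j assume "j < N"
    have "cis (2*pi/N)^j * w2 = complex_of_real \<rho> * cis (\<theta> j + pi/N)"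
      using \<omega>j[of j] unfolding w2_def \<omega>_def by (simp add: cis_mult[symmetric] mult_ac)
    then show "isinv (1 - cscale (cis (2*pi/N)^j * w2) h) (f (\<theta> j + pi/N))" using finv by simp
  qed
  define D where "D = Q2 - Q1"
  have Deq: "D = scaleR (1/N) (\<Sum>j<N. f (\<theta> j + pi/N) - f (\<theta> j))"
    unfolding D_def A1[symmetric] A2[symmetric] by (simp add: sum_subtractf scaleR_diff_right)
  have each: "norm (f (\<theta> j + pi/N) - f (\<theta> j)) \<le> 1/4" if j: "j < N" for j
  proof -
    have t0: "0 \<le> \<theta> j" unfolding \<theta>_def by simp
    have "\<theta> j \<le> real N * (2*pi/N)" unfolding \<theta>_def using j by (intro mult_right_mono) auto
    then have t1: "\<theta> j \<le> 2 * pi" using N0 by simp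
    have "pi / N \<le> pi" using N0 by (simp add: divide_le_eq)
    then have "\<theta> j \<in> {0..4*pi}" "\<theta> j + pi/N \<in> {0..4*pi}" using t0 t1 pi_gt_zero by auto
    moreover have "dist (\<theta> j + pi/N) (\<theta> j) < d" using Nd by (simp add: dist_real_def)
    ultimately have "dist (f (\<theta> j + pi/N)) (f (\<theta> j)) < 1/4" by (rule d(2))
    then show ?thesis by (simp add: dist_norm)
  qed
  have "norm D \<le> (1/N) * norm (\<Sum>j<N. f (\<theta> j + pi/N) - f (\<theta> j))"
    unfolding Deq by simp
  also have "\<dots> \<le> (1/N) * (\<Sum>j<N. norm (f (\<theta> j + pi/N) - f (\<theta> j)))"
    by (intro mult_left_mono norm_sum) auto
  also have "\<dots> \<le> (1/N) * (real N * (1/4))"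
    using sum_bounded_above[of "{..<N}" "\<lambda>j. norm (f (\<theta> j + pi/N) - f (\<theta> j))" "1/4"] each
    by (intro mult_left_mono) auto
  also have "\<dots> = 1/4" using N0 by simp
  finally have nD: "norm D \<le> 1/4" .
  have i1: "(1 + x) * Q2 = 1" using Q2 w2N unfolding isinv_def by simp
  have i2: "Q1 * (1 - x) = 1" using Q1 w1N unfolding isinv_def by simp
  have "(1 + x) * D * (1 - x) = ((1 + x) * Q2) * (1 - x) - (1 + x) * (Q1 * (1 - x))"
    unfolding D_def by (simp add: algebra_simps)
  also have "\<dots> = - (2 *\<^sub>R x)" unfolding i1 i2 by (simp add: algebra_simps scaleR_2)
  finally have key: "(1 + x) * D * (1 - x) = - (2 *\<^sub>R x)" .
  have nx: "norm x = 1"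
  proof -
    have "norm x = \<rho>^N * norm (h^N)" unfolding x_def using \<rho> by simp
    also have "norm (h^N) = norm h ^ N" unfolding N_def by (rule norm_pow2[OF sa])
    finally have "norm x = (\<rho> * norm h)^N" by (simp add: power_mult_distrib)
    then show ?thesis using \<rho> by simp
  qed
  have n1: "norm (1 + x) \<le> 2" using norm_triangle_ineq[of 1 x] nx by simp
  have n2: "norm (1 - x) \<le> 2" using norm_triangle_ineq4[of 1 x] nx by simp
  have "2 = norm ((1 + x) * D * (1 - x))" unfolding key using nx by simp
  also have "\<dots> \<le> norm (1 + x) * norm D * norm (1 - x)"
    by (meson mult_right_mono norm_ge_zero norm_mult_ineq order_trans)
  also have "\<dots> \<le> 2 * (1/4) * 2"
    using n1 n2 nD by (intro mult_mono) auto
  finally show False by simp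
qed



lemma hom_zero: "star_hom \<psi> \<Longrightarrow> \<psi> 0 = 0"
  unfolding star_hom_def by (metis add_cancel_right_right add_0)

lemma hom_add: "star_hom \<psi> \<Longrightarrow> \<psi> (x + y) = \<psi> x + \<psi> y"
  unfolding star_hom_def by blast

lemma hom_mult: "star_hom \<psi> \<Longrightarrow> \<psi> (x * y) = \<psi> x * \<psi> y"
  unfolding star_hom_def by blast

lemma hom_cstar: "star_hom \<psi> \<Longrightarrow> \<psi> (cstar x) = cstar (\<psi> x)"
  unfolding star_hom_def by blast

lemma hom_cscale: "star_hom \<psi> \<Longrightarrow> \<psi> (cscale c x) = cscale c (\<psi> x)"
  unfolding star_hom_def by blast

lemma hom_minus: "star_hom \<psi> \<Longrightarrow> \<psi> (- x) = - \<psi> x"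
  using hom_add[of \<psi> x "-x"] hom_zero[of \<psi>] by (simp add: eq_neg_iff_add_eq_0 add.commute)

lemma hom_diff: "star_hom \<psi> \<Longrightarrow> \<psi> (x - y) = \<psi> x - \<psi> y"
  using hom_add[of \<psi> x "-y"] hom_minus[of \<psi> y] by simp

lemma hom_scaleR: "star_hom \<psi> \<Longrightarrow> \<psi> (r *\<^sub>R x) = r *\<^sub>R \<psi> x"
  using hom_cscale[of \<psi> "complex_of_real r" x] by (simp add: cscale_real)

lemma hom_sum: "star_hom \<psi> \<Longrightarrow> \<psi> (\<Sum>k\<in>A. f k) = (\<Sum>k\<in>A. \<psi> (f k))"
  by (induction A rule: infinite_finite_induct) (auto simp: hom_zero hom_add)

lemma hom_power: "star_hom \<psi> \<Longrightarrow> \<psi> 1 = 1 \<Longrightarrow> \<psi> (x ^ m) = \<psi> x ^ m"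
  by (induction m) (auto simp: hom_mult)

lemma star_hom_contractive:
  fixes \<psi> :: "'a::cstar_algebra \<Rightarrow> 'b::cstar_algebra"
  assumes hom: "star_hom \<psi>" and one: "\<psi> 1 = 1"
  shows "norm (\<psi> a) \<le> norm a"
proof -
  define h0 where "h0 = cstar a * a"
  have sa0: "cstar h0 = h0" unfolding h0_def by (simp add: cstar_mult cstar_cstar)
  have bound: "norm (\<psi> h0) \<le> t" if t: "norm h0 < t" for t
  proof -
    have t0: "t > 0" using t norm_ge_zero[of h0] by linarith
    define k0 where "k0 = (1/t) *\<^sub>R h0"
    have nk0: "norm k0 < 1" unfolding k0_def using t t0 by (simp add: divide_less_eq)
    define k where "k = \<psi> k0"
    have k: "k = (1/t) *\<^sub>R \<psi> h0" unfolding k_def k0_def by (rule hom_scaleR[OF hom])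
    have sak0: "cstar k0 = k0"
      unfolding k0_def cscale_real[symmetric] by (simp add: cstar_cscale sa0)
    have sak: "cstar k = k" unfolding k_def hom_cstar[OF hom, symmetric] sak0 ..
    have inv: "\<exists>y. isinv (1 - cscale v (k ^ Suc N)) y" if v: "cmod v \<le> 1" for v N
    proof -
      have "norm (k0 ^ Suc N) \<le> norm k0 ^ Suc N" by (rule norm_power_ineq)
      also have "\<dots> = norm k0 * norm k0 ^ N" by simp
      also have "\<dots> \<le> norm k0 * 1" using nk0 by (intro mult_left_mono power_le_one) auto
      finally have a: "norm (k0 ^ Suc N) < 1" using nk0 by simp
      have "norm (cscale v (k0 ^ Suc N)) = cmod v * norm (k0 ^ Suc N)" by (rule norm_cscale)
      also have "\<dots> \<le> 1 * norm (k0 ^ Suc N)" using v by (intro mult_right_mono) auto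
      finally have "norm (cscale v (k0 ^ Suc N)) < 1" using a by simp
      then obtain y where y: "isinv (1 - cscale v (k0 ^ Suc N)) y" using neumann by blast
      have "\<psi> (1 - cscale v (k0 ^ Suc N)) = 1 - cscale v (k ^ Suc N)"
        unfolding k_def by (simp only: hom_diff[OF hom] hom_cscale[OF hom] hom_power[OF hom one] one)
      moreover have "isinv (\<psi> (1 - cscale v (k0 ^ Suc N))) (\<psi> y)"
        using y unfolding isinv_def by (simp add: hom_mult[OF hom, symmetric] one)
      ultimately show ?thesis by auto
    qed
    have "norm k \<le> 1" by (rule selfadj_norm_le1[OF sak inv])
    then have "(1/t) * norm (\<psi> h0) \<le> 1" unfolding k using t0 by simp
    then show ?thesis using t0 by (simp add: divide_le_eq)
  qed
  have b: "norm (\<psi> h0) \<le> norm h0" by (rule dense_ge) (rule bound)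
  have "(norm (\<psi> a))^2 = norm (\<psi> h0)"
    unfolding h0_def by (simp add: hom_mult[OF hom] hom_cstar[OF hom] cstar_identity)
  also have "\<dots> \<le> norm h0" by (rule b)
  also have "\<dots> = (norm a)^2" unfolding h0_def by (simp add: cstar_identity)
  finally show ?thesis by (rule power2_le_imp_le) simp
qed

lemma star_hom_continuous:
  fixes \<psi> :: "'a::cstar_algebra \<Rightarrow> 'b::cstar_algebra"
  assumes hom: "star_hom \<psi>" and one: "\<psi> 1 = 1"
  shows "continuous_on S \<psi>"
proof -
  have "bounded_linear \<psi>"
    by (rule bounded_linear_intro[where K = 1])
       (auto simp: hom_add[OF hom] hom_scaleR[OF hom] star_hom_contractive[OF hom one])
  then show ?thesis by (rule linear_continuous_on)
qed



lemma hrelD: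
  fixes S :: "'a::cstar_algebra set"
  assumes "(x, y) \<in> hrel n S"
  shows "x \<in> hforms n S \<and> y \<in> hforms n S \<and>
      (\<exists>p :: real \<Rightarrow> nat \<Rightarrow> nat \<Rightarrow> 'a. (\<forall>t\<in>{0..1}. p t \<in> hforms n S) \<and>
         (\<forall>i j. continuous_on {0..1} (\<lambda>t. p t i j)) \<and> p 0 = x \<and> p 1 = y)"
  using assms unfolding hrel_def by simp

lemma hrel_equiv:
  fixes S :: "'a::cstar_algebra set"
  shows "equiv (hforms n S) (hrel n S)"
proof (rule equivI)
  show "hrel n S \<subseteq> hforms n S \<times> hforms n S" unfolding hrel_def by auto
  show "refl_on (hforms n S) (hrel n S)"
  proof (rule refl_onI)
    fix x assume x: "x \<in> hforms n S"
    show "(x, x) \<in> hrel n S" unfolding hrel_def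
      using x by (auto intro!: exI[of _ "\<lambda>t. x"])
  qed
  show "sym (hrel n S)"
  proof (rule symI)
    fix x y assume "(x, y) \<in> hrel n S"
    then obtain p :: "real \<Rightarrow> nat \<Rightarrow> nat \<Rightarrow> 'a" where x: "x \<in> hforms n S" and y: "y \<in> hforms n S"
      and p: "\<forall>t\<in>{0..1}. p t \<in> hforms n S" "\<forall>i j. continuous_on {0..1} (\<lambda>t. p t i j)" "p 0 = x" "p 1 = y"
      by (blast dest: hrelD)
    have c: "continuous_on {0..1} (\<lambda>t. p (1 - t) i j)" for i j
      by (rule continuous_on_compose2[OF p(2)[rule_format, of i j]]) (auto intro!: continuous_intros)
    show "(y, x) \<in> hrel n S" unfolding hrel_def
      using x y p c by (auto intro!: exI[of _ "\<lambda>t. p (1 - t)"])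
  qed
  show "trans (hrel n S)"
  proof (rule transI)
    fix x y z assume "(x, y) \<in> hrel n S" "(y, z) \<in> hrel n S"
    then obtain p q :: "real \<Rightarrow> nat \<Rightarrow> nat \<Rightarrow> 'a" where x: "x \<in> hforms n S" and z: "z \<in> hforms n S"
      and p: "\<forall>t\<in>{0..1}. p t \<in> hforms n S" "\<forall>i j. continuous_on {0..1} (\<lambda>t. p t i j)" "p 0 = x" "p 1 = y"
      and q: "\<forall>t\<in>{0..1}. q t \<in> hforms n S" "\<forall>i j. continuous_on {0..1} (\<lambda>t. q t i j)" "q 0 = y" "q 1 = z"
      by (blast dest: hrelD)
    define r where "r t = (if t \<le> 1/2 then p (2 * t) else q (2 * t - 1))" for t :: real
    have c: "continuous_on {0..1} (\<lambda>t. r t i j)" for i j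
    proof -
      have "(\<lambda>t. r t i j) = (\<lambda>t. p t i j) +++ (\<lambda>t. q t i j)"
        unfolding r_def joinpaths_def by auto
      moreover have "path ((\<lambda>t. p t i j) +++ (\<lambda>t. q t i j))"
        using p q by (intro path_join_imp) (auto simp: path_def pathstart_def pathfinish_def)
      ultimately show ?thesis unfolding path_def by (metis (no_types))
    qed
    have m: "r t \<in> hforms n S" if "t \<in> {0..1}" for t
      using that p(1) q(1) unfolding r_def by auto
    show "(x, z) \<in> hrel n S" unfolding hrel_def
      using x z c m p q by (auto simp: r_def intro!: exI[of _ r])
  qed
qed

lemma mmult_amp:
  assumes "star_hom \<psi>"
  shows "mmult n (amp n \<psi> A) (amp n \<psi> B) = amp n \<psi> (mmult n A B)"
  unfolding mmult_def amp_def
  by (auto simp: hom_sum[OF assms] hom_mult[OF assms] intro!: ext sum.cong)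

lemma amp_mone:
  assumes "star_hom \<psi>" "\<psi> 1 = 1"
  shows "amp n \<psi> (mone n) = mone n"
  unfolding mone_def amp_def using assms hom_zero[OF assms(1)] by (auto intro!: ext)

lemma hforms_map:
  assumes hom: "star_hom \<psi>" and one: "\<psi> 1 = 1" and EF: "\<forall>x\<in>E. \<psi> x \<in> F"
    and X: "X \<in> hforms n E"
  shows "amp n \<psi> X \<in> hforms n F"
proof -
  have Xm: "X \<in> mats n E" and sa: "madj n X = X" and iv: "minvertible n X"
    using X unfolding hforms_def by auto
  obtain Y where Y: "Y \<in> mats n UNIV" "mmult n X Y = mone n" "mmult n Y X = mone n"
    using iv unfolding minvertible_def by auto
  have m: "amp n \<psi> X \<in> mats n F" using Xm EF unfolding mats_def amp_def by auto
  have "madj n (amp n \<psi> X) = amp n \<psi> X"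
  proof (intro ext)
    fix i j
    show "madj n (amp n \<psi> X) i j = amp n \<psi> X i j"
    proof (cases "i < n \<and> j < n")
      case True
      have "cstar (X j i) = X i j" using fun_cong[OF fun_cong[OF sa, of i], of j] True
        unfolding madj_def by simp
      then show ?thesis using True unfolding madj_def amp_def by (simp add: hom_cstar[OF hom, symmetric])
    qed (auto simp: madj_def amp_def)
  qed
  moreover have "minvertible n (amp n \<psi> X)"
    unfolding minvertible_def
  proof (rule bexI[of _ "amp n \<psi> Y"])
    show "amp n \<psi> Y \<in> mats n UNIV" unfolding mats_def amp_def by auto
    show "mmult n (amp n \<psi> X) (amp n \<psi> Y) = mone n \<and> mmult n (amp n \<psi> Y) (amp n \<psi> X) = mone n"
      by (simp add: mmult_amp[OF hom] Y amp_mone[OF hom one])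
  qed
  ultimately show ?thesis using m unfolding hforms_def by auto
qed

lemma hrel_map:
  fixes \<psi> :: "'a::cstar_algebra \<Rightarrow> 'b::cstar_algebra"
  assumes hom: "star_hom \<psi>" and one: "\<psi> 1 = 1" and EF: "\<forall>x\<in>E. \<psi> x \<in> F"
    and XY: "(X, Y) \<in> hrel n E"
  shows "(amp n \<psi> X, amp n \<psi> Y) \<in> hrel n F"
proof -
  obtain p :: "real \<Rightarrow> nat \<Rightarrow> nat \<Rightarrow> 'a" where x: "X \<in> hforms n E" and y: "Y \<in> hforms n E"
    and p: "\<forall>t\<in>{0..1}. p t \<in> hforms n E" "\<forall>i j. continuous_on {0..1} (\<lambda>t. p t i j)" "p 0 = X" "p 1 = Y"
    using hrelD[OF XY] by blast
  have c: "continuous_on {0..1} (\<lambda>t. amp n \<psi> (p t) i j)" for i j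
  proof (cases "i < n \<and> j < n")
    case True
    have "continuous_on {0..1} (\<lambda>t. \<psi> (p t i j))"
      by (rule continuous_on_compose2[OF star_hom_continuous[OF hom one] p(2)[rule_format]]) auto
    then show ?thesis using True unfolding amp_def by simp
  next
    case False
    then have "amp n \<psi> (p t) i j = 0" for t by (auto simp: amp_def)
    then show ?thesis by (simp add: continuous_on_const)
  qed
  show ?thesis unfolding hrel_def
    using hforms_map[OF hom one EF] x y p c
    by (auto intro!: exI[of _ "\<lambda>t. amp n \<psi> (p t)"])
qed

theorem proposition3p7:
  fixes E :: "'a::cstar_algebra set" and F :: "'b::cstar_algebra set"
    and \<phi> :: "'a \<Rightarrow> 'b" and \<phi>t :: "'a \<Rightarrow> 'b" and n :: nat
  assumes "operator_system E" and "cstar_envelope E"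
    and "operator_system F" and "cstar_envelope F"
    and "ucp E F \<phi>"
    and "star_hom \<phi>t" and "\<forall>x\<in>E. \<phi>t x = \<phi> x"
  shows "\<exists>\<Phi>. (\<forall>c \<in> Vclasses n E. \<Phi> c \<in> Vclasses n F) \<and>
           (\<forall>x \<in> hforms n E. \<Phi> (hrel n E `` {x}) = hrel n F `` {amp n \<phi> x})"
proof -
  note hom = assms(6)
  have oneE: "1 \<in> E" using assms(1) unfolding operator_system_def by auto
  have one: "\<phi>t 1 = 1" using assms(5,7) oneE unfolding ucp_def by auto
  have EF: "\<forall>x\<in>E. \<phi>t x \<in> F" using assms(5,7) unfolding ucp_def by auto
  have ampeq: "amp n \<phi> X = amp n \<phi>t X" if "X \<in> hforms n E" for X
    using that assms(7) unfolding hforms_def mats_def amp_def by (auto intro!: ext)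
  have eqE: "equiv (hforms n E) (hrel n E)" and eqF: "equiv (hforms n F) (hrel n F)"
    by (rule hrel_equiv)+
  define \<Phi> where "\<Phi> c = hrel n F `` {amp n \<phi> (SOME x. x \<in> c)}" for c
  have some: "(x, SOME x'. x' \<in> hrel n E `` {x}) \<in> hrel n E" if x: "x \<in> hforms n E" for x
  proof -
    have "x \<in> hrel n E `` {x}" by (rule equiv_class_self[OF eqE x])
    then have "(SOME x'. x' \<in> hrel n E `` {x}) \<in> hrel n E `` {x}" by (rule someI[where P="\<lambda>x'. x' \<in> hrel n E `` {x}"])
    then show ?thesis by simp
  qed
  have main: "\<Phi> (hrel n E `` {x}) = hrel n F `` {amp n \<phi> x}" if x: "x \<in> hforms n E" for x
  proof -
    define x' where "x' = (SOME x'. x' \<in> hrel n E `` {x})"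
    have xx': "(x, x') \<in> hrel n E" using some[OF x] unfolding x'_def .
    then have x': "x' \<in> hforms n E" unfolding hrel_def by auto
    have "(amp n \<phi>t x, amp n \<phi>t x') \<in> hrel n F" by (rule hrel_map[OF hom one EF xx'])
    then have "(amp n \<phi> x, amp n \<phi> x') \<in> hrel n F" using ampeq[OF x] ampeq[OF x'] by simp
    then have "hrel n F `` {amp n \<phi> x} = hrel n F `` {amp n \<phi> x'}"
      by (rule equiv_class_eq[OF eqF])
    then show ?thesis unfolding \<Phi>_def x'_def by simp
  qed
  have cls: "\<Phi> c \<in> Vclasses n F" if c: "c \<in> Vclasses n E" for c
  proof -
    obtain x where x: "x \<in> hforms n E" and cx: "c = hrel n E `` {x}"
      using c unfolding Vclasses_def by (rule quotientE)
    have "amp n \<phi> x \<in> hforms n F" using hforms_map[OF hom one EF x] ampeq[OF x] by simp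
    then show ?thesis unfolding cx main[OF x] Vclasses_def by (rule quotientI)
  qed
  show ?thesis using cls main by blast
qed


end
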